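(* Let $n\ge 2$, let $M$ be an $n$-Metric on a set $X$, and let $\mathcal{T}$ be the topology on $X$ generated by the $M$-open balls $B^M_\epsilon(x)=\{y\in X\mid M(\langle x\rangle^{n-1},y)<\epsilon\}$ ($x\in X$, $\epsilon>0$). Then $(X,\mathcal{T})$ is a metric space, i.e. there is a metric on $X$ whose open balls generate $\mathcal{T}$.
   Context: Notation: $\langle a\rangle^k$ denotes the $k$-tuple $(a,\dots,a)$ inserted into an argument list. An $n$-Metric on $X$ is a function $M:X^n\to\mathbb{R}$ such that for all $x_1,\dots,x_n,a\in X$: (1) $0\le M(\langle x_1\rangle^{n-1},x_2)$; (2) $M(x_1,\dots,x_n)=M(x_{\pi(1)},\dots,x_{\pi(n)})$ for every permutation $\pi$ of $\{1,\dots,n\}$; (3) $M(\langle x_1\rangle^{n-1},x_2)=0$ if and only if $x_1=x_2$; (4) $M(x_1,\dots,x_n)\le M(x_1,\dots,x_{n-1},a)+M(\langle a\rangle^{n-1},x_n)$. The $M$-open balls form a basis of a topology on $X$. *)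

theory Defs
  imports "HOL-Analysis.Analysis" "HOL-Combinatorics.Permutations"
begin

text \<open>An n-tuple of elements of X is represented as a list of length n with
entries in X; \<open>M\<close> is only constrained on such lists.
\<open>replicate (n-1) x @ [y]\<close> is the tuple (x,...,x,y).\<close>

definition nMetric :: "nat \<Rightarrow> 'a set \<Rightarrow> ('a list \<Rightarrow> real) \<Rightarrow> bool" where
  "nMetric n X M \<longleftrightarrow>
     (\<forall>x1\<in>X. \<forall>x2\<in>X. 0 \<le> M (replicate (n-1) x1 @ [x2])) \<and>
     (\<forall>xs. set xs \<subseteq> X \<and> length xs = n \<longrightarrow>
        (\<forall>\<pi>. \<pi> permutes {0..<n} \<longrightarrow> M xs = M (map (\<lambda>i. xs ! (\<pi> i)) [0..<n]))) \<and>
     (\<forall>x1\<in>X. \<forall>x2\<in>X. M (replicate (n-1) x1 @ [x2]) = 0 \<longleftrightarrow> x1 = x2) \<and>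
     (\<forall>xs a. set xs \<subseteq> X \<and> length xs = n \<and> a \<in> X \<longrightarrow>
        M xs \<le> M (butlast xs @ [a]) + M (replicate (n-1) a @ [last xs]))"

definition nball :: "nat \<Rightarrow> 'a set \<Rightarrow> ('a list \<Rightarrow> real) \<Rightarrow> 'a \<Rightarrow> real \<Rightarrow> 'a set" where
  "nball n X M x \<epsilon> = {y \<in> X. M (replicate (n-1) x @ [y]) < \<epsilon>}"

definition nMetric_topology :: "nat \<Rightarrow> 'a set \<Rightarrow> ('a list \<Rightarrow> real) \<Rightarrow> 'a topology" where
  "nMetric_topology n X M = topology_generated_by {nball n X M x \<epsilon> | x \<epsilon>. x \<in> X \<and> \<epsilon> > 0}"

end

theory Submission
  imports Defs
begin

lemma tri_ax:
  assumes "nMetric n X M" "set xs \<subseteq> X" "length xs = n" "a \<in> X"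
  shows "M xs \<le> M (butlast xs @ [a]) + M (replicate (n-1) a @ [last xs])"
  using assms unfolding nMetric_def by blast

lemma nn_ax:
  assumes "nMetric n X M" "x \<in> X" "y \<in> X"
  shows "0 \<le> M (replicate (n-1) x @ [y])"
  using assms unfolding nMetric_def by blast

lemma zero_ax:
  assumes "nMetric n X M" "x \<in> X" "y \<in> X"
  shows "M (replicate (n-1) x @ [y]) = 0 \<longleftrightarrow> x = y"
  using assms unfolding nMetric_def by blast

lemma perm_eq:
  assumes "nMetric n X M" "set xs \<subseteq> X" "length xs = n" "mset xs = mset ys"
  shows "M ys = M xs"
proof -
  obtain p where p: "p permutes {..<length xs}" "permute_list p xs = ys"
    using mset_eq_permutation[of ys xs] assms(4) by metis
  have "p permutes {0..<n}" using p(1) assms(3) by (simp add: atLeast0LessThan)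
  then have "M xs = M (map (\<lambda>i. xs ! (p i)) [0..<n])"
    using assms(1-3) unfolding nMetric_def by blast
  also have "\<dots> = M ys" using p(2) assms(3) by (simp add: permute_list_def)
  finally show ?thesis by simp
qed

lemma tri:
  assumes "nMetric n X M" "n \<ge> 2" "x \<in> X" "y \<in> X" "z \<in> X"
  shows "M (replicate (n-1) x @ [z]) \<le> M (replicate (n-1) x @ [y]) + M (replicate (n-1) y @ [z])"
proof -
  let ?xs = "replicate (n-1) x @ [z]"
  have "set ?xs \<subseteq> X" "length ?xs = n" using assms by auto
  moreover have "\<forall>xs a. set xs \<subseteq> X \<and> length xs = n \<and> a \<in> X \<longrightarrow>
        M xs \<le> M (butlast xs @ [a]) + M (replicate (n-1) a @ [last xs])"
    using assms(1) unfolding nMetric_def by blast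
  ultimately have "M ?xs \<le> M (butlast ?xs @ [y]) + M (replicate (n-1) y @ [last ?xs])"
    using assms(4) by blast
  then show ?thesis by simp
qed

lemma chain:
  assumes "nMetric n X M" "n \<ge> 2" "x \<in> X" "y \<in> X"
  shows "j \<le> n - 2 \<Longrightarrow> M (replicate (n-1-j) x @ replicate (Suc j) y)
            \<le> real (Suc j) * M (replicate (n-1) x @ [y])"
proof (induction j)
  case 0
  then show ?case by simp
next
  case (Suc j)
  let ?k = "n - 1 - Suc j"
  let ?xs = "replicate ?k x @ replicate (Suc (Suc j)) y"
  have len: "length ?xs = n" using Suc.prems by simp
  have set: "set ?xs \<subseteq> X" using assms by auto
  have "M ?xs \<le> M (butlast ?xs @ [x]) + M (replicate (n-1) x @ [last ?xs])"
    using tri_ax[OF assms(1) set len assms(3)] .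
  moreover have "last ?xs = y" by simp
  moreover have "butlast ?xs = replicate ?k x @ replicate (Suc j) y"
  proof -
    have "replicate (Suc (Suc j)) y = replicate (Suc j) y @ [y]"
      by (metis replicate_Suc replicate_append_same)
    then show ?thesis by (metis append_assoc butlast_snoc)
  qed
  moreover have "M (replicate ?k x @ replicate (Suc j) y @ [x]) = M (replicate (n-1-j) x @ replicate (Suc j) y)"
  proof -
    have nk: "n - 1 - j = Suc ?k" using Suc.prems by simp
    have "mset (replicate (n-1-j) x @ replicate (Suc j) y) = mset (replicate ?k x @ replicate (Suc j) y @ [x])"
      unfolding nk by (simp add: add.commute)
    moreover have "set (replicate (n-1-j) x @ replicate (Suc j) y) \<subseteq> X" using assms(3,4) by auto
    moreover have "length (replicate (n-1-j) x @ replicate (Suc j) y) = n" using Suc.prems by simp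
    ultimately show ?thesis using perm_eq[OF assms(1)] by blast
  qed
  ultimately have "M ?xs \<le> M (replicate (n-1-j) x @ replicate (Suc j) y) + M (replicate (n-1) x @ [y])"
    by simp
  also have "\<dots> \<le> real (Suc j) * M (replicate (n-1) x @ [y]) + M (replicate (n-1) x @ [y])"
    using Suc by simp
  finally show ?case by (simp add: algebra_simps)
qed

lemma rev_bound:
  assumes "nMetric n X M" "n \<ge> 2" "x \<in> X" "y \<in> X"
  shows "M (replicate (n-1) y @ [x]) \<le> real (n-1) * M (replicate (n-1) x @ [y])"
proof -
  have c: "M (replicate (n-1-(n-2)) x @ replicate (Suc (n-2)) y) \<le> real (Suc (n-2)) * M (replicate (n-1) x @ [y])"
    by (rule chain[OF assms]) simp
  have e1: "n-1-(n-2) = 1" using assms(2) by arith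
  have e2: "Suc (n-2) = n-1" using assms(2) by arith
  have c2: "M ([x] @ replicate (n-1) y) \<le> real (n-1) * M (replicate (n-1) x @ [y])"
  proof -
    have r1: "replicate 1 x = [x]" by simp
    show ?thesis using c by (simp only: e1 e2 r1)
  qed
  have m: "mset ([x] @ replicate (n-1) y) = mset (replicate (n-1) y @ [x])" by simp
  have s: "set ([x] @ replicate (n-1) y) \<subseteq> X" using assms(3,4) by auto
  have l: "length ([x] @ replicate (n-1) y) = n" using assms(2) by simp
  have "M (replicate (n-1) y @ [x]) = M ([x] @ replicate (n-1) y)"
    by (rule perm_eq[OF assms(1) s l m])
  then show ?thesis using c2 by simp
qed

theorem theorem3p14:
  fixes X :: "'a set" and M :: "'a list \<Rightarrow> real" and n :: nat
  assumes "n \<ge> 2" and "nMetric n X M"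
  shows "\<exists>d. Metric_space X d \<and> Metric_space.mtopology X d = nMetric_topology n X M"
proof -
  define D where "D x y = M (replicate (n-1) x @ [y])" for x y
  define d where "d x y = (if x \<in> X \<and> y \<in> X then max (D x y) (D y x) else 0)" for x y
  have Dnn: "x \<in> X \<Longrightarrow> y \<in> X \<Longrightarrow> 0 \<le> D x y" for x y
    unfolding D_def by (rule nn_ax[OF assms(2)])
  have D0: "x \<in> X \<Longrightarrow> y \<in> X \<Longrightarrow> D x y = 0 \<longleftrightarrow> x = y" for x y
    unfolding D_def by (rule zero_ax[OF assms(2)])
  have Dtri: "x \<in> X \<Longrightarrow> y \<in> X \<Longrightarrow> z \<in> X \<Longrightarrow> D x z \<le> D x y + D y z" for x y z
    using tri[OF assms(2,1)] unfolding D_def by blast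
  have Drev: "x \<in> X \<Longrightarrow> y \<in> X \<Longrightarrow> D y x \<le> real (n-1) * D x y" for x y
    using rev_bound[OF assms(2,1)] unfolding D_def by blast
  have ms: "Metric_space X d"
  proof
    fix x y show "0 \<le> d x y" unfolding d_def using Dnn by (auto simp: le_max_iff_disj)
    show "d x y = d y x" unfolding d_def by auto
  next
    fix x y assume "x \<in> X" "y \<in> X"
    then show "d x y = 0 \<longleftrightarrow> x = y" unfolding d_def using D0 Dnn
      by (auto simp: max_def)
  next
    fix x y z assume a: "x \<in> X" "y \<in> X" "z \<in> X"
    have "D x z \<le> D x y + D y z" "D z x \<le> D z y + D y x" using Dtri a by auto
    then show "d x z \<le> d x y + d y z" unfolding d_def using a by auto
  qed
  interpret Metric_space X d by (rule ms)
  have np: "real (n-1) \<ge> 1" using assms(1) by simp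
  have ball_in: "nball n X M x (e / real (n-1)) \<subseteq> mball x e" if x: "x \<in> X" and e: "(e::real) > 0" for x e
  proof
    fix y assume y: "y \<in> nball n X M x (e / real (n-1))"
    have yX: "y \<in> X" and Dy: "D x y < e / real (n-1)" using y unfolding nball_def D_def by auto
    have "e / real (n-1) \<le> e" using np e by (simp add: divide_le_eq)
    then have "D x y < e" by (rule order.strict_trans2[OF Dy])
    moreover have "D y x < e"
    proof -
      have "D y x \<le> real (n-1) * D x y" using Drev x yX by blast
      also have "\<dots> < real (n-1) * (e / real (n-1))" by (rule mult_strict_left_mono[OF Dy]) (use np in linarith)
      also have "\<dots> = e" using np by simp
      finally show ?thesis .
    qed
    ultimately have "d x y < e" using x yX unfolding d_def by auto
    then show "y \<in> mball x e" using x yX by simp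
  qed
  let ?S = "{nball n X M x \<epsilon> | x \<epsilon>. x \<in> X \<and> \<epsilon> > 0}"
  have "openin mtopology U \<longleftrightarrow> generate_topology_on ?S U" for U
  proof
    assume o: "openin mtopology U"
    then have UX: "U \<subseteq> X" and r: "\<forall>x\<in>U. \<exists>r>0. mball x r \<subseteq> U"
      unfolding openin_mtopology by auto
    then obtain r where r: "\<And>x. x \<in> U \<Longrightarrow> r x > 0 \<and> mball x (r x) \<subseteq> U" by metis
    let ?K = "(\<lambda>x. nball n X M x (r x / real (n-1))) ` U"
    have "U = \<Union>?K"
    proof
      show "U \<subseteq> \<Union>?K"
      proof
        fix x assume xU: "x \<in> U"
        have xX: "x \<in> X" using xU UX by auto
        have "D x x = 0" using D0[OF xX xX] by simp
        moreover have "0 < r x / real (n-1)" using r[OF xU] np by simp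
        ultimately have "D x x < r x / real (n-1)" by simp
        then have "x \<in> nball n X M x (r x / real (n-1))"
          using xX unfolding nball_def D_def by auto
        then show "x \<in> \<Union>?K" using xU by blast
      qed
      show "\<Union>?K \<subseteq> U" using ball_in r UX by blast
    qed
    moreover have "generate_topology_on ?S (\<Union>?K)"
    proof (rule generate_topology_on.UN)
      fix k assume "k \<in> ?K"
      then obtain x where "x \<in> U" "k = nball n X M x (r x / real (n-1))" by blast
      then have "k \<in> ?S" using UX r np by force
      then show "generate_topology_on ?S k" by (rule generate_topology_on.Basis)
    qed
    ultimately show "generate_topology_on ?S U" by simp
  next
    assume "generate_topology_on ?S U"
    then show "openin mtopology U"
    proof induction
      case Empty then show ?case by simp
    next
      case (Int a b) then show ?case by blast
    next
      case (UN K) then show ?case by blast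
    next
      case (Basis s)
      then obtain x e where s: "s = nball n X M x e" "x \<in> X" "e > 0" by blast
      show ?case unfolding openin_mtopology
      proof (intro conjI allI impI)
        show "s \<subseteq> X" using s unfolding nball_def by auto
      next
        fix y assume ys: "y \<in> s"
        have yX: "y \<in> X" and Dy: "D x y < e" using ys s unfolding nball_def D_def by auto
        show "\<exists>r>0. mball y r \<subseteq> s"
        proof (intro exI conjI)
          show "e - D x y > 0" using Dy by simp
          show "mball y (e - D x y) \<subseteq> s"
          proof
            fix z assume "z \<in> mball y (e - D x y)"
            then have zX: "z \<in> X" and "d y z < e - D x y" by auto
            then have "D y z < e - D x y" using yX zX unfolding d_def by auto
            then have "D x z < e" using Dtri[OF s(2) yX zX] by simp
            then show "z \<in> s" using s zX unfolding nball_def D_def by auto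
          qed
        qed
      qed
    qed
  qed
  then have "mtopology = nMetric_topology n X M"
    unfolding nMetric_topology_def
    by (intro topology_eq[THEN iffD2] allI) (simp add: openin_topology_generated_by_iff)
  then show ?thesis using ms by blast
qed

end
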